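(* Let $A,B,C,D\in\mathcal M_n$ be accretive with $\Re A\le\Re C$, $\Re B\le\Re D$, and $W(A),W(B)\subset S_\alpha$ for some $0\le\alpha<\pi/2$. Then for every $f\in\mathfrak m$, $$\Re(A\sigma_fB)\le\sec^2(\alpha)\,\Re(C\sigma_fD).$$
   Context: A matrix $A$ is accretive if $\Re A=\frac{A+A^*}{2}$ is positive definite. $W(A)$ is the numerical range, $S_\alpha=\{z:\Re z>0,\ |\Im z|\le\tan(\alpha)\Re z\}$. $\le$ is the Löwner order. $\mathfrak m$ is the set of matrix monotone $f:(0,\infty)\to(0,\infty)$ with $f(1)=1$; each has a unique probability measure $\nu_f$ on $[0,1]$ with $f(x)=\int_0^1((1-t)+tx^{-1})^{-1}d\nu_f(t)$, $x>0$. For accretive $A,B$: $A!_tB=((1-t)A^{-1}+tB^{-1})^{-1}$ and $A\sigma_fB:=\int_0^1A!_tB\,d\nu_f(t)$. *)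

theory Defs
  imports "HOL-Analysis.Analysis" "HOL-Probability.Probability_Measure"
begin

definition adj :: "complex^'n^'n \<Rightarrow> complex^'n^'n" where
  "adj A = (\<chi> i j. cnj (A $ j $ i))"

definition hermitian :: "complex^'n^'n \<Rightarrow> bool" where
  "hermitian A \<longleftrightarrow> adj A = A"

definition qform :: "complex^'n^'n \<Rightarrow> complex^'n \<Rightarrow> complex" where
  "qform A x = (\<Sum>i\<in>UNIV. cnj (x $ i) * ((A *v x) $ i))"

definition re_part :: "complex^'n^'n \<Rightarrow> complex^'n^'n" where
  "re_part A = (1/2 :: real) *\<^sub>R (A + adj A)"

definition pos_def :: "complex^'n^'n \<Rightarrow> bool" where
  "pos_def H \<longleftrightarrow> hermitian H \<and> (\<forall>x. x \<noteq> 0 \<longrightarrow> 0 < Re (qform H x))"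

definition loewner_le :: "complex^'n^'n \<Rightarrow> complex^'n^'n \<Rightarrow> bool" where
  "loewner_le X Y \<longleftrightarrow> hermitian X \<and> hermitian Y \<and> (\<forall>x. 0 \<le> Re (qform (Y - X) x))"

definition accretive :: "complex^'n^'n \<Rightarrow> bool" where
  "accretive A \<longleftrightarrow> pos_def (re_part A)"

definition num_range :: "complex^'n^'n \<Rightarrow> complex set" where
  "num_range A = {qform A x | x. norm x = 1}"

definition sector :: "real \<Rightarrow> complex set" where
  "sector \<alpha> = {z. 0 < Re z \<and> \<bar>Im z\<bar> \<le> tan \<alpha> * Re z}"

definition hmean :: "real \<Rightarrow> complex^'n^'n \<Rightarrow> complex^'n^'n \<Rightarrow> complex^'n^'n" where
  "hmean t A B = matrix_inv ((1 - t) *\<^sub>R matrix_inv A + t *\<^sub>R matrix_inv B)"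

text \<open>A sigma_f B, given the representing probability measure \<nu> of f\<close>
definition sigma_mean :: "real measure \<Rightarrow> complex^'n^'n \<Rightarrow> complex^'n^'n \<Rightarrow> complex^'n^'n" where
  "sigma_mean \<nu> A B = (\<integral>t. hmean t A B \<partial>\<nu>)"

text \<open>k x k complex matrices as functions nat => nat => complex (entries outside k irrelevant)\<close>
definition mmul :: "nat \<Rightarrow> (nat \<Rightarrow> nat \<Rightarrow> complex) \<Rightarrow> (nat \<Rightarrow> nat \<Rightarrow> complex) \<Rightarrow> nat \<Rightarrow> nat \<Rightarrow> complex" where
  "mmul k X Y = (\<lambda>i j. \<Sum>l<k. X i l * Y l j)"

definition madj :: "(nat \<Rightarrow> nat \<Rightarrow> complex) \<Rightarrow> nat \<Rightarrow> nat \<Rightarrow> complex" where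
  "madj X = (\<lambda>i j. cnj (X j i))"

definition munitary :: "nat \<Rightarrow> (nat \<Rightarrow> nat \<Rightarrow> complex) \<Rightarrow> bool" where
  "munitary k U \<longleftrightarrow> (\<forall>i<k. \<forall>j<k. mmul k (madj U) U i j = (if i = j then 1 else 0))"

definition mdiag :: "(nat \<Rightarrow> real) \<Rightarrow> nat \<Rightarrow> nat \<Rightarrow> complex" where
  "mdiag d = (\<lambda>i j. if i = j then complex_of_real (d i) else 0)"

text \<open>U diag(d) U^*, i.e. the Hermitian matrix with eigenvalues d and eigenvectors columns of U;
  applying f to it (functional calculus) gives U diag(f o d) U^*\<close>
definition spec :: "nat \<Rightarrow> (nat \<Rightarrow> nat \<Rightarrow> complex) \<Rightarrow> (nat \<Rightarrow> real) \<Rightarrow> nat \<Rightarrow> nat \<Rightarrow> complex" where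
  "spec k U d = mmul k (mmul k U (mdiag d)) (madj U)"

definition mloewner :: "nat \<Rightarrow> (nat \<Rightarrow> nat \<Rightarrow> complex) \<Rightarrow> (nat \<Rightarrow> nat \<Rightarrow> complex) \<Rightarrow> bool" where
  "mloewner k X Y \<longleftrightarrow>
     (\<forall>i<k. \<forall>j<k. X i j = cnj (X j i) \<and> Y i j = cnj (Y j i)) \<and>
     (\<forall>x. 0 \<le> Re (\<Sum>i<k. \<Sum>j<k. cnj (x i) * (Y i j - X i j) * x j))"

definition matrix_monotone :: "(real \<Rightarrow> real) \<Rightarrow> bool" where
  "matrix_monotone f \<longleftrightarrow>
     (\<forall>k U V a b. munitary k U \<longrightarrow> munitary k V \<longrightarrow> (\<forall>i<k. 0 < a i \<and> 0 < b i) \<longrightarrow>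
        mloewner k (spec k U a) (spec k V b) \<longrightarrow> mloewner k (spec k U (f \<circ> a)) (spec k V (f \<circ> b)))"

definition class_m :: "(real \<Rightarrow> real) set" where
  "class_m = {f. matrix_monotone f \<and> (\<forall>x>0. 0 < f x) \<and> f 1 = 1}"

definition represents :: "real measure \<Rightarrow> (real \<Rightarrow> real) \<Rightarrow> bool" where
  "represents \<nu> f \<longleftrightarrow> prob_space \<nu> \<and> sets \<nu> = sets (restrict_space borel {0..1}) \<and>
     space \<nu> = {0..1} \<and>
     (\<forall>x>0. f x = (\<integral>t. 1 / ((1 - t) + t / x) \<partial>\<nu>))"

end

theory Submission
  imports Defs
begin


lemma cR: "(r::real) *\<^sub>R (z::complex) = of_real r * z"
  by (simp add: scaleR_conv_of_real)


definition ip :: "complex^'n \<Rightarrow> complex^'n \<Rightarrow> complex" where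
  "ip u v = (\<Sum>i\<in>UNIV. cnj (u $ i) * v $ i)"

lemma qform_ip: "qform M x = ip x (M *v x)"
  by (simp add: qform_def ip_def)

lemma ip_add_left: "ip (u + v) w = ip u w + ip v w"
  by (simp add: ip_def distrib_right sum.distrib)
lemma ip_add_right: "ip u (v + w) = ip u v + ip u w"
  by (simp add: ip_def distrib_left sum.distrib)
lemma ip_diff_left: "ip (u - v) w = ip u w - ip v w"
  by (simp add: ip_def left_diff_distrib sum_subtractf)
lemma ip_diff_right: "ip u (v - w) = ip u v - ip u w"
  by (simp add: ip_def right_diff_distrib sum_subtractf)
lemma ip_scaleR_left: "ip (r *\<^sub>R u) w = of_real r * ip u w"
  by (simp add: ip_def sum_distrib_left cR mult_ac)
lemma ip_scaleR_right: "ip u (r *\<^sub>R w) = of_real r * ip u w"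
  by (simp add: ip_def sum_distrib_left cR mult_ac)
lemma ip_smult_left: "ip (c *s u) w = cnj c * ip u w"
  by (simp add: ip_def sum_distrib_left mult_ac)
lemma ip_smult_right: "ip u (c *s w) = c * ip u w"
  by (simp add: ip_def sum_distrib_left mult_ac)

lemma mv_add: "M *v (u + v) = M *v u + M *v v"
  by (simp add: matrix_vector_right_distrib)
lemma mv_diff: "(M::complex^'n^'n) *v (u - v) = M *v u - M *v v"
  by (simp add: vec_eq_iff matrix_vector_mult_def right_diff_distrib sum_subtractf)
lemma mv_smult: "(M::complex^'n^'n) *v (c *s u) = c *s (M *v u)"
  by (simp add: vec_eq_iff matrix_vector_mult_def sum_distrib_left mult_ac)
lemma mv_scaleR: "(M::complex^'n^'n) *v (r *\<^sub>R u) = r *\<^sub>R (M *v u)"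
  by (simp add: vec_eq_iff matrix_vector_mult_def sum_distrib_left cR mult_ac)
lemma madd_v: "((M::complex^'n^'n) + N) *v u = M *v u + N *v u"
  by (simp add: vec_eq_iff matrix_vector_mult_def distrib_right sum.distrib)
lemma mdiff_v: "((M::complex^'n^'n) - N) *v u = M *v u - N *v u"
  by (simp add: vec_eq_iff matrix_vector_mult_def left_diff_distrib sum_subtractf)
lemma mscaleR_v: "((r::real) *\<^sub>R (M::complex^'n^'n)) *v u = r *\<^sub>R (M *v u)"
  by (simp add: vec_eq_iff matrix_vector_mult_def sum_distrib_left cR mult_ac)

lemma qform_add: "qform (M + N) x = qform M x + qform N x"
  by (simp add: qform_ip madd_v ip_add_right)
lemma qform_diff: "qform (M - N) x = qform M x - qform N x"
  by (simp add: qform_ip mdiff_v ip_diff_right)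
lemma qform_scaleR: "qform (r *\<^sub>R M) x = of_real r * qform M x"
  by (simp add: qform_ip mscaleR_v ip_scaleR_right)

lemma qform_adj: "qform (adj M) x = cnj (qform M x)"
proof -
  have "qform (adj M) x = (\<Sum>i\<in>UNIV. \<Sum>j\<in>UNIV. cnj (x $ i) * cnj (M $ j $ i) * x $ j)"
    by (simp add: qform_def adj_def matrix_vector_mult_def sum_distrib_left mult_ac)
  also have "\<dots> = (\<Sum>j\<in>UNIV. \<Sum>i\<in>UNIV. cnj (x $ i) * cnj (M $ j $ i) * x $ j)"
    by (rule sum.swap)
  also have "\<dots> = cnj (qform M x)"
    by (simp add: qform_def matrix_vector_mult_def sum_distrib_left mult_ac)
  finally show ?thesis .
qed

lemma Re_qform_re_part: "Re (qform (re_part M) x) = Re (qform M x)"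
  by (simp add: re_part_def qform_scaleR qform_add qform_adj)

lemma adj_add: "adj (M + N) = adj M + adj N"
  by (simp add: adj_def vec_eq_iff)
lemma adj_scaleR: "adj (r *\<^sub>R M) = r *\<^sub>R adj M"
  by (simp add: adj_def vec_eq_iff cR)
lemma adj_adj: "adj (adj M) = M"
  by (simp add: adj_def vec_eq_iff)
lemma hermitian_re_part: "hermitian (re_part M)"
  by (simp add: hermitian_def re_part_def adj_scaleR adj_add adj_adj add.commute)
lemma hermitian_scaleR: "hermitian M \<Longrightarrow> hermitian (r *\<^sub>R M)"
  by (simp add: hermitian_def adj_scaleR)

lemma qform_scale_vec: "qform M (r *\<^sub>R x) = of_real (r^2) * qform M x"
  by (simp add: qform_ip mv_scaleR ip_scaleR_left ip_scaleR_right power2_eq_square)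



lemma ip_cnj: "ip u v = cnj (ip v u)"
  by (simp add: ip_def mult.commute)

lemma qform_comb: "qform M (p *s c + q *s u) =
   cnj p * p * ip c (M *v c) + cnj p * q * ip c (M *v u) + cnj q * p * ip u (M *v c) + cnj q * q * ip u (M *v u)"
  by (simp add: qform_ip mv_add mv_smult ip_add_left ip_add_right ip_smult_left ip_smult_right algebra_simps)

lemma sect_key:
  fixes M :: "complex^'n^'n" and \<tau> :: real
  assumes tau: "0 \<le> \<tau>" and hM: "\<And>z. \<bar>Im (qform M z)\<bar> \<le> \<tau> * Re (qform M z)"
    and pos: "\<And>z. 0 \<le> Re (qform M z)"
  shows "2 * Re (ip c (M *v a)) - Re (qform M a) \<le> (1 + \<tau>\<^sup>2) * Re (qform M c)"
proof -
  define u where "u = a - c"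
  have a: "a = c + u" by (simp add: u_def)
  define scc where "scc = ip c (M *v c)"
  define scu where "scu = ip c (M *v u)"
  define suc where "suc = ip u (M *v c)"
  define suu where "suu = ip u (M *v u)"
  have qa: "qform M a = scc + scu + suc + suu"
    by (simp add: a qform_ip mv_add ip_add_left ip_add_right scc_def scu_def suc_def suu_def)
  have ca: "ip c (M *v a) = scc + scu"
    by (simp add: a mv_add ip_add_right scc_def scu_def)
  have hc: "Re (qform M c) = Re scc" by (simp add: qform_ip scc_def)
  have hu: "0 \<le> Re suu" using pos[of u] by (simp add: qform_ip suu_def)
  define D where "D = Re scu - Re suc"
  have main: "D \<le> \<tau>\<^sup>2 * Re scc + Re suu"
  proof (cases "\<tau> = 0")
    case True
    have 1: "Im (qform M (1 *s c + \<i> *s u)) = 0" using hM[of "1 *s c + \<i> *s u"] True by simp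
    have 2: "Im (qform M (1 *s c + (-\<i>) *s u)) = 0" using hM[of "1 *s c + (-\<i>) *s u"] True by simp
    have "Im (qform M (1 *s c + \<i> *s u)) - Im (qform M (1 *s c + (-\<i>) *s u)) = 2 * D"
      using qform_comb[of M 1 c "\<i>" u] qform_comb[of M 1 c "-\<i>" u]
      by (simp add: D_def scc_def scu_def suc_def suu_def)
    with 1 2 have "D = 0" by simp
    then show ?thesis using hu True by simp
  next
    case False
    then have tp: "0 < \<tau>" using tau by simp
    let ?p = "of_real \<tau> :: complex"
    have 1: "Im (qform M (?p *s c + \<i> *s u)) \<le> \<tau> * Re (qform M (?p *s c + \<i> *s u))"
      using hM[of "?p *s c + \<i> *s u"] by linarith
    have 2: "- Im (qform M (?p *s c + (-\<i>) *s u)) \<le> \<tau> * Re (qform M (?p *s c + (-\<i>) *s u))"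
      using hM[of "?p *s c + (-\<i>) *s u"] by linarith
    have e1: "Im (qform M (?p *s c + \<i> *s u)) = \<tau>^2 * Im scc + \<tau> * Re scu - \<tau> * Re suc + Im suu"
      using qform_comb[of M ?p c "\<i>" u] qform_comb[of M ?p c "-\<i>" u]
      by (simp add: scc_def scu_def suc_def suu_def power2_eq_square)
    have e2: "Im (qform M (?p *s c + (-\<i>) *s u)) = \<tau>^2 * Im scc - \<tau> * Re scu + \<tau> * Re suc + Im suu"
      using qform_comb[of M ?p c "\<i>" u] qform_comb[of M ?p c "-\<i>" u]
      by (simp add: scc_def scu_def suc_def suu_def power2_eq_square)
    have e3: "Re (qform M (?p *s c + \<i> *s u)) + Re (qform M (?p *s c + (-\<i>) *s u)) = 2 * \<tau>^2 * Re scc + 2 * Re suu"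
      using qform_comb[of M ?p c "\<i>" u] qform_comb[of M ?p c "-\<i>" u]
      by (simp add: scc_def scu_def suc_def suu_def power2_eq_square)
    have "2 * \<tau> * D = Im (qform M (?p *s c + \<i> *s u)) - Im (qform M (?p *s c + (-\<i>) *s u))"
      using e1 e2 unfolding D_def by (simp add: algebra_simps)
    also have "\<dots> \<le> \<tau> * Re (qform M (?p *s c + \<i> *s u)) + \<tau> * Re (qform M (?p *s c + (-\<i>) *s u))"
      using 1 2 by linarith
    also have "\<dots> = \<tau> * (2 * \<tau>^2 * Re scc + 2 * Re suu)"
      using e3 by (metis distrib_left)
    finally have "2 * \<tau> * D \<le> \<tau> * (2 * \<tau>^2 * Re scc + 2 * Re suu)" .
    then have "\<tau> * D \<le> \<tau> * (\<tau>^2 * Re scc + Re suu)" by (simp add: algebra_simps)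
    then show ?thesis using tp by simp
  qed
  show ?thesis
    using main unfolding qa ca hc D_def by (simp add: algebra_simps)
qed



definition posre :: "complex^'n^'n \<Rightarrow> bool" where
  "posre M \<longleftrightarrow> (\<forall>x. x \<noteq> 0 \<longrightarrow> 0 < Re (qform M x))"

lemma ip_zero_right: "ip u 0 = 0" by (simp add: ip_def)

lemma posre_invertible: assumes "posre M" shows "invertible M"
proof -
  have "\<forall>x. M *v x = 0 \<longrightarrow> x = 0"
    using assms by (auto simp: posre_def qform_ip ip_zero_right)
  then show ?thesis
    using matrix_left_invertible_ker invertible_left_inverse by blast
qed

lemma matrix_inv_props:
  fixes M :: "complex^'n^'n"
  assumes "invertible M"
  shows "M ** matrix_inv M = mat 1" "matrix_inv M ** M = mat 1"
proof -
  have "\<exists>A'. M ** A' = mat 1 \<and> A' ** M = mat 1" using assms by (simp add: invertible_def)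
  then have "M ** matrix_inv M = mat 1 \<and> matrix_inv M ** M = mat 1"
    unfolding matrix_inv_def by (rule someI_ex)
  then show "M ** matrix_inv M = mat 1" "matrix_inv M ** M = mat 1" by auto
qed

lemma inv_apply:
  fixes M :: "complex^'n^'n"
  assumes "invertible M"
  shows "M *v (matrix_inv M *v y) = y"
  by (simp add: matrix_vector_mul_assoc matrix_inv_props[OF assms])

lemma accretive_posre: "accretive M \<Longrightarrow> posre M"
  by (simp add: accretive_def pos_def_def posre_def Re_qform_re_part)

lemma posre_inv: fixes M :: "complex^'n^'n" assumes "posre M" shows "posre (matrix_inv M)"
  unfolding posre_def
proof (intro allI impI)
  fix v :: "complex^'n" assume v: "v \<noteq> 0"
  have I: "invertible M" using posre_invertible[OF assms] .
  define p where "p = matrix_inv M *v v"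
  have Mp: "M *v p = v" using inv_apply[OF I] by (simp add: p_def)
  have "p \<noteq> 0" using v Mp by auto
  then have "0 < Re (qform M p)" using assms by (simp add: posre_def)
  moreover have "qform (matrix_inv M) v = cnj (qform M p)"
  proof -
    have "qform (matrix_inv M) v = ip v p" by (simp add: qform_ip p_def)
    also have "\<dots> = ip (M *v p) p" by (simp add: Mp)
    also have "\<dots> = cnj (qform M p)" by (simp add: qform_ip ip_cnj[of "M *v p"])
    finally show ?thesis .
  qed
  ultimately show "0 < Re (qform (matrix_inv M) v)" by simp
qed

lemma posre_comb:
  fixes M N :: "complex^'n^'n"
  assumes "posre M" "posre N" "0 \<le> t" "t \<le> 1"
  shows "posre ((1 - t) *\<^sub>R M + t *\<^sub>R N)"
  unfolding posre_def
proof (intro allI impI)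
  fix x :: "complex^'n" assume x: "x \<noteq> 0"
  have a: "0 < Re (qform M x)" "0 < Re (qform N x)" using assms x by (auto simp: posre_def)
  have "Re (qform ((1 - t) *\<^sub>R M + t *\<^sub>R N) x) = (1 - t) * Re (qform M x) + t * Re (qform N x)"
    by (simp add: qform_add qform_scaleR)
  also have "\<dots> > 0"
  proof (cases "t = 0")
    case True then show ?thesis using a by simp
  next
    case False then show ?thesis using a assms(3,4)
      by (smt (verit) mult_nonneg_nonneg mult_pos_pos)
  qed
  finally show "0 < Re (qform ((1 - t) *\<^sub>R M + t *\<^sub>R N) x)" .
qed

lemma hmean_decomp:
  fixes M N :: "complex^'n^'n"
  assumes "posre M" "posre N" "0 \<le> t" "t \<le> 1"
  shows "\<exists>a b. M *v a = hmean t M N *v x \<and> N *v b = hmean t M N *v x \<and> x = (1 - t) *\<^sub>R a + t *\<^sub>R b"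
proof -
  define Y where "Y = (1 - t) *\<^sub>R matrix_inv M + t *\<^sub>R matrix_inv N"
  have IY: "invertible Y" unfolding Y_def
    by (intro posre_invertible posre_comb posre_inv assms)
  define y where "y = hmean t M N *v x"
  have Yy: "Y *v y = x" using inv_apply[OF IY] by (simp add: y_def hmean_def Y_def)
  define a where "a = matrix_inv M *v y"
  define b where "b = matrix_inv N *v y"
  have "M *v a = y" unfolding a_def by (rule inv_apply[OF posre_invertible[OF assms(1)]])
  moreover have "N *v b = y" unfolding b_def by (rule inv_apply[OF posre_invertible[OF assms(2)]])
  moreover have "x = (1 - t) *\<^sub>R a + t *\<^sub>R b"
    using Yy by (simp add: Y_def madd_v mscaleR_v a_def b_def)
  ultimately show ?thesis unfolding y_def by blast
qed

lemma hmean_G1: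
  fixes M N :: "complex^'n^'n"
  assumes "M *v a = X *v x" "N *v b = X *v x" "x = (1 - t) *\<^sub>R a + t *\<^sub>R b"
  shows "Re (qform X x) = (1 - t) * Re (qform M a) + t * Re (qform N b)"
proof -
  have "qform X x = ip ((1 - t) *\<^sub>R a + t *\<^sub>R b) (X *v x)"
    by (simp add: qform_ip assms(3)[symmetric])
  also have "\<dots> = of_real (1 - t) * qform M a + of_real t * qform N b"
    by (simp add: ip_add_left ip_scaleR_left qform_ip assms(1,2))
  finally show ?thesis by simp
qed

lemma hmean_G2:
  fixes M N :: "complex^'n^'n"
  assumes "M *v a = X *v x" "N *v b = X *v x" "x = (1 - t) *\<^sub>R c + t *\<^sub>R d"
  shows "Re (qform X x) = (1 - t) * Re (ip c (M *v a)) + t * Re (ip d (N *v b))"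
proof -
  have "qform X x = ip ((1 - t) *\<^sub>R c + t *\<^sub>R d) (X *v x)"
    by (simp add: qform_ip assms(3)[symmetric])
  also have "\<dots> = of_real (1 - t) * ip c (M *v a) + of_real t * ip d (N *v b)"
    by (simp add: ip_add_left ip_scaleR_left assms(1,2))
  finally show ?thesis by simp
qed



lemma qform_zero: "qform M 0 = 0" by (simp add: qform_def)

lemma posre_nonneg: "posre M \<Longrightarrow> 0 \<le> Re (qform M z)"
  unfolding posre_def by (cases "z = 0") (auto simp: qform_zero less_imp_le)

lemma pointwise:
  fixes A B C D :: "complex^'n^'n" and \<tau> :: real
  assumes pA: "posre A" and pB: "posre B" and pC: "posre C" and pD: "posre D"
    and tau: "0 \<le> \<tau>"
    and hA: "\<And>z. \<bar>Im (qform A z)\<bar> \<le> \<tau> * Re (qform A z)"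
    and hB: "\<And>z. \<bar>Im (qform B z)\<bar> \<le> \<tau> * Re (qform B z)"
    and AC: "\<And>z. Re (qform A z) \<le> Re (qform C z)"
    and BD: "\<And>z. Re (qform B z) \<le> Re (qform D z)"
    and t: "0 \<le> t" "t \<le> 1"
  shows "Re (qform (hmean t A B) x) \<le> (1 + \<tau>\<^sup>2) * Re (qform (hmean t C D) x)"
proof -
  have posA: "\<And>z. 0 \<le> Re (qform A z)"
    using posre_nonneg[OF pA] .
  have posB: "\<And>z. 0 \<le> Re (qform B z)"
    using posre_nonneg[OF pB] .
  obtain a b where ab: "A *v a = hmean t A B *v x" "B *v b = hmean t A B *v x"
      "x = (1 - t) *\<^sub>R a + t *\<^sub>R b"
    using hmean_decomp[OF pA pB t] by blast
  obtain c d where cd: "C *v c = hmean t C D *v x" "D *v d = hmean t C D *v x"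
      "x = (1 - t) *\<^sub>R c + t *\<^sub>R d"
    using hmean_decomp[OF pC pD t] by blast
  let ?L = "Re (qform (hmean t A B) x)"
  have L1: "?L = (1 - t) * Re (qform A a) + t * Re (qform B b)"
    by (rule hmean_G1[OF ab])
  have L2: "?L = (1 - t) * Re (ip c (A *v a)) + t * Re (ip d (B *v b))"
    by (rule hmean_G2[OF ab(1,2) cd(3)])
  have R: "Re (qform (hmean t C D) x) = (1 - t) * Re (qform C c) + t * Re (qform D d)"
    by (rule hmean_G1[OF cd])
  have sA: "2 * Re (ip c (A *v a)) - Re (qform A a) \<le> (1 + \<tau>\<^sup>2) * Re (qform C c)"
    using sect_key[OF tau hA posA, of c a] AC[of c] by (smt (verit) mult_left_mono zero_le_power2)
  have sB: "2 * Re (ip d (B *v b)) - Re (qform B b) \<le> (1 + \<tau>\<^sup>2) * Re (qform D d)"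
    using sect_key[OF tau hB posB, of d b] BD[of d] by (smt (verit) mult_left_mono zero_le_power2)
  have "?L = (1 - t) * (2 * Re (ip c (A *v a)) - Re (qform A a)) + t * (2 * Re (ip d (B *v b)) - Re (qform B b))"
    using L1 L2 by (simp add: algebra_simps)
  also have "\<dots> \<le> (1 - t) * ((1 + \<tau>\<^sup>2) * Re (qform C c)) + t * ((1 + \<tau>\<^sup>2) * Re (qform D d))"
    using t sA sB by (intro add_mono mult_left_mono) auto
  also have "\<dots> = (1 + \<tau>\<^sup>2) * Re (qform (hmean t C D) x)"
    unfolding R by (simp add: algebra_simps)
  finally show ?thesis .
qed



lemma inv_formula:
  fixes Y :: "complex^'n^'n"
  assumes d: "det Y \<noteq> 0"
  shows "matrix_inv Y = (\<chi> i j. det (\<chi> r s. if s = i then axis j 1 $ r else Y $ r $ s) / det Y)"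
proof -
  have I: "invertible Y" using d invertible_det_nz by blast
  have "matrix_inv Y $ i $ j = det (\<chi> r s. if s = i then axis j 1 $ r else Y $ r $ s) / det Y" for i j
  proof -
    have "Y *v (matrix_inv Y *v axis j 1) = axis j 1" by (rule inv_apply[OF I])
    then have "matrix_inv Y *v axis j 1 = (\<chi> k. det(\<chi> r s. if s=k then axis j 1 $ r else Y$r$s) / det Y)"
      using cramer[OF d] by blast
    moreover have "(matrix_inv Y *v axis j 1) $ i = matrix_inv Y $ i $ j"
      by (simp add: matrix_vector_mult_def axis_def if_distrib cong: if_cong)
    ultimately show ?thesis by simp
  qed
  then show ?thesis by (simp add: vec_eq_iff)
qed

lemma continuous_on_det:
  fixes F :: "real \<Rightarrow> complex^'n^'n"
  assumes "\<And>r s. continuous_on S (\<lambda>t. F t $ r $ s)"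
  shows "continuous_on S (\<lambda>t. det (F t))"
  unfolding det_def
  by (intro continuous_on_sum continuous_on_mult continuous_on_const continuous_on_prod assms)

lemma hmean_continuous:
  fixes M N :: "complex^'n^'n"
  assumes pM: "posre M" and pN: "posre N"
  shows "continuous_on {0..1} (\<lambda>t. hmean t M N)"
proof -
  define Y where "Y t = (1 - t) *\<^sub>R matrix_inv M + t *\<^sub>R matrix_inv N" for t :: real
  have dY: "det (Y t) \<noteq> 0" if "t \<in> {0..1}" for t
  proof -
    have "posre (Y t)" unfolding Y_def
      using that by (intro posre_comb posre_inv pM pN) auto
    then have "invertible (Y t)" by (rule posre_invertible)
    then show ?thesis by (simp add: invertible_det_nz)
  qed
  have eq: "hmean t M N = (\<chi> i j. det (\<chi> r s. if s = i then axis j 1 $ r else Y t $ r $ s) / det (Y t))"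
    if "t \<in> {0..1}" for t
    unfolding hmean_def Y_def[symmetric] using inv_formula[OF dY[OF that]] .
  have cY: "continuous_on {0..1} (\<lambda>t. Y t $ r $ s)" for r s
  proof -
    have "(\<lambda>t. Y t $ r $ s) = (\<lambda>t. of_real (1 - t) * matrix_inv M $ r $ s + of_real t * matrix_inv N $ r $ s)"
      by (simp add: Y_def cR)
    moreover have "continuous_on {0..1} (\<lambda>t. of_real (1 - t) * matrix_inv M $ r $ s + of_real t * matrix_inv N $ r $ s)"
      by (intro continuous_on_add continuous_on_mult continuous_on_const continuous_on_of_real continuous_on_diff continuous_on_id)
    ultimately show ?thesis by (simp only:)
  qed
  have cF: "continuous_on {0..1} (\<lambda>t. (\<chi> r s. if s = i then axis j 1 $ r else Y t $ r $ s) $ r $ s)" for i j r s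
    by (cases "s = i") (simp_all add: cY)
  have C: "continuous_on {0..1} (\<lambda>t. (\<chi> i j. det (\<chi> r s. if s = i then axis j 1 $ r else Y t $ r $ s) / det (Y t)) :: complex^'n^'n)"
  proof (intro continuous_on_vec_lambda)
    fix i j
    show "continuous_on {0..1} (\<lambda>t. det (\<chi> r s. if s = i then axis j 1 $ r else Y t $ r $ s) / det (Y t))"
    proof (rule continuous_on_divide)
      show "continuous_on {0..1} (\<lambda>t. det (\<chi> r s. if s = i then axis j 1 $ r else Y t $ r $ s))"
        by (rule continuous_on_det) (rule cF)
      show "continuous_on {0..1} (\<lambda>t. det (Y t))"
        by (rule continuous_on_det) (rule cY)
      show "\<forall>t\<in>{0..1}. det (Y t) \<noteq> 0" using dY by blast
    qed
  qed
  show ?thesis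
  proof (rule continuous_on_eq[OF C])
    fix t :: real assume "t \<in> {0..1}"
    then show "(\<chi> i j. det (\<chi> r s. if s = i then axis j 1 $ r else Y t $ r $ s) / det (Y t)) = hmean t M N"
      by (rule eq[symmetric])
  qed
qed

lemma hmean_integrable:
  fixes M N :: "complex^'n^'n"
  assumes pM: "posre M" and pN: "posre N" and rep: "represents \<nu> f"
  shows "integrable \<nu> (\<lambda>t. hmean t M N)"
proof -
  have ps: "prob_space \<nu>" and se: "sets \<nu> = sets (restrict_space borel {0..1})"
    and sp: "space \<nu> = {0..1}" using rep by (auto simp: represents_def)
  have fm: "finite_measure \<nu>" using ps by (simp add: prob_space_def)
  have c: "continuous_on {0..1} (\<lambda>t. hmean t M N)" by (rule hmean_continuous[OF pM pN])
  have meas: "(\<lambda>t. hmean t M N) \<in> borel_measurable \<nu>"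
    using borel_measurable_continuous_on_restrict[OF c] measurable_cong_sets[OF se refl, of borel] by metis
  have "compact ((\<lambda>t. hmean t M N) ` {0..1})"
    by (rule compact_continuous_image[OF c]) simp
  then have "bounded ((\<lambda>t. hmean t M N) ` {0..1})" by (rule compact_imp_bounded)
  then obtain B where B: "\<forall>x\<in>(\<lambda>t. hmean t M N) ` {0..1}. norm x \<le> B"
    unfolding bounded_iff by blast
  have B': "norm (hmean t M N) \<le> B" if "t \<in> space \<nu>" for t
    using B that sp by blast
  show ?thesis
    by (rule finite_measure.integrable_const_bound[OF fm, where B=B]) (use B' meas in auto)
qed

lemma sect_from_range:
  fixes M :: "complex^'n^'n"
  assumes "num_range M \<subseteq> sector \<alpha>"
  shows "\<bar>Im (qform M z)\<bar> \<le> tan \<alpha> * Re (qform M z)"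
proof (cases "z = 0")
  case True then show ?thesis by (simp add: qform_zero)
next
  case False
  define k where "k = 1 / norm z"
  have kp: "0 < k" using False by (simp add: k_def)
  have "norm (k *\<^sub>R z) = 1" using False by (simp add: k_def)
  then have "qform M (k *\<^sub>R z) \<in> sector \<alpha>" using assms unfolding num_range_def by blast
  then have "\<bar>Im (qform M (k *\<^sub>R z))\<bar> \<le> tan \<alpha> * Re (qform M (k *\<^sub>R z))"
    by (simp add: sector_def)
  then have "k^2 * \<bar>Im (qform M z)\<bar> \<le> k^2 * (tan \<alpha> * Re (qform M z))"
    by (simp add: qform_scale_vec abs_mult mult_ac)
  then show ?thesis using kp by simp
qed

lemma bl_qform: "bounded_linear (\<lambda>M::complex^'n^'n. Re (qform M x))"
proof -
  have "linear (\<lambda>M::complex^'n^'n. Re (qform M x))"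
    by (rule linearI) (simp_all add: qform_add qform_scaleR)
  then show ?thesis by (simp add: linear_conv_bounded_linear)
qed

lemma qform_sigma:
  fixes M N :: "complex^'n^'n"
  assumes "posre M" "posre N" "represents \<nu> f"
  shows "Re (qform (sigma_mean \<nu> M N) x) = (\<integral>t. Re (qform (hmean t M N) x) \<partial>\<nu>)"
  unfolding sigma_mean_def
  using integral_bounded_linear[OF bl_qform hmean_integrable[OF assms]] by simp

theorem mainTheorem10:
  fixes A B C D :: "complex^'n^'n" and \<alpha> :: real and f :: "real \<Rightarrow> real" and \<nu> :: "real measure"
  assumes "accretive A" "accretive B" "accretive C" "accretive D"
    and "loewner_le (re_part A) (re_part C)" and "loewner_le (re_part B) (re_part D)"
    and "0 \<le> \<alpha>" "\<alpha> < pi / 2"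
    and "num_range A \<subseteq> sector \<alpha>" "num_range B \<subseteq> sector \<alpha>"
    and "f \<in> class_m" and "represents \<nu> f"
  shows "loewner_le (re_part (sigma_mean \<nu> A B)) ((1 / (cos \<alpha>)\<^sup>2) *\<^sub>R re_part (sigma_mean \<nu> C D))"
proof -
  have pA: "posre A" and pB: "posre B" and pC: "posre C" and pD: "posre D"
    using assms(1-4) by (simp_all add: accretive_posre)
  define \<tau> where "\<tau> = tan \<alpha>"
  have tau: "0 \<le> \<tau>" unfolding \<tau>_def using assms(7,8) by (rule tan_pos_pi2_le)
  have cp: "0 < cos \<alpha>" using assms(7,8) by (intro cos_gt_zero_pi) auto
  have k: "1 / (cos \<alpha>)\<^sup>2 = 1 + \<tau>\<^sup>2"
    using tan_sec[of \<alpha>] cp unfolding \<tau>_def by (simp add: power_one_over inverse_eq_divide)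
  have hA: "\<And>z. \<bar>Im (qform A z)\<bar> \<le> \<tau> * Re (qform A z)"
    unfolding \<tau>_def by (rule sect_from_range[OF assms(9)])
  have hB: "\<And>z. \<bar>Im (qform B z)\<bar> \<le> \<tau> * Re (qform B z)"
    unfolding \<tau>_def by (rule sect_from_range[OF assms(10)])
  have AC: "\<And>z. Re (qform A z) \<le> Re (qform C z)"
    using assms(5) by (simp add: loewner_le_def qform_diff Re_qform_re_part)
  have BD: "\<And>z. Re (qform B z) \<le> Re (qform D z)"
    using assms(6) by (simp add: loewner_le_def qform_diff Re_qform_re_part)
  have sp: "space \<nu> = {0..1}" using assms(12) by (simp add: represents_def)
  have main: "Re (qform (sigma_mean \<nu> A B) x) \<le> (1 + \<tau>\<^sup>2) * Re (qform (sigma_mean \<nu> C D) x)" for x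
  proof -
    have iAB: "integrable \<nu> (\<lambda>t. Re (qform (hmean t A B) x))"
      by (rule integrable_bounded_linear[OF bl_qform hmean_integrable[OF pA pB assms(12)]])
    have iCD: "integrable \<nu> (\<lambda>t. Re (qform (hmean t C D) x))"
      by (rule integrable_bounded_linear[OF bl_qform hmean_integrable[OF pC pD assms(12)]])
    have "Re (qform (sigma_mean \<nu> A B) x) = (\<integral>t. Re (qform (hmean t A B) x) \<partial>\<nu>)"
      by (rule qform_sigma[OF pA pB assms(12)])
    also have "\<dots> \<le> (\<integral>t. (1 + \<tau>\<^sup>2) * Re (qform (hmean t C D) x) \<partial>\<nu>)"
    proof (rule integral_mono[OF iAB])
      show "integrable \<nu> (\<lambda>t. (1 + \<tau>\<^sup>2) * Re (qform (hmean t C D) x))"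
        using iCD by simp
      fix t assume "t \<in> space \<nu>"
      then have "0 \<le> t" "t \<le> 1" using sp by auto
      then show "Re (qform (hmean t A B) x) \<le> (1 + \<tau>\<^sup>2) * Re (qform (hmean t C D) x)"
        by (rule pointwise[OF pA pB pC pD tau hA hB AC BD])
    qed
    also have "\<dots> = (1 + \<tau>\<^sup>2) * Re (qform (sigma_mean \<nu> C D) x)"
      by (simp add: qform_sigma[OF pC pD assms(12)])
    finally show ?thesis .
  qed
  show ?thesis
    unfolding loewner_le_def
  proof (intro conjI allI hermitian_re_part hermitian_scaleR)
    fix x
    have "Re (qform ((1 / (cos \<alpha>)\<^sup>2) *\<^sub>R re_part (sigma_mean \<nu> C D) - re_part (sigma_mean \<nu> A B)) x)
       = (1 + \<tau>\<^sup>2) * Re (qform (sigma_mean \<nu> C D) x) - Re (qform (sigma_mean \<nu> A B) x)"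
      by (simp add: qform_diff qform_scaleR Re_qform_re_part k)
    then show "0 \<le> Re (qform ((1 / (cos \<alpha>)\<^sup>2) *\<^sub>R re_part (sigma_mean \<nu> C D) - re_part (sigma_mean \<nu> A B)) x)"
      using main[of x] by simp
  qed
qed

end
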